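(* Let $0<p<1$, let $\mathcal{X}=\{\frac1n,\frac2n,\ldots,\frac nn\}$, and let $\mathcal{H}_{EP;p}$ be the equal-piece classifier class described in the context. For any $\alpha,\epsilon\in(0,1)$ with $\epsilon<24/p$ and $\frac{2}{|\mathcal{X}|}<\alpha<\frac{p^2\epsilon}{24}$, the class $\mathcal{H}_{EP;p}$ is $(\alpha,\epsilon)$-separable.
   Context: Each hypothesis $h\in\mathcal{H}_{EP;p}$ is determined by parameters $a^h_1,\ldots,a^h_k$ with $a^h_1+p<a^h_2,\ \ldots,\ a^h_{k-1}+p<a^h_k,\ a^h_k+p<1$, defining intervals $[a^h_1,a^h_1+p],\ldots,[a^h_k,a^h_k+p]$; for $x\in\mathcal{X}$, $h(x)=1$ iff $x\in[a^h_i,a^h_i+p]$ for some $1\le i\le k$. For a class $\mathcal{H}$ over finite domain $\mathcal{X}$, the hypotheses graph is bipartite with parts $\mathcal{H}$ and $\mathcal{X}$, $h$ adjacent to $x$ iff $h(x)=1$. For $S\subseteq\mathcal{X}$, $T\subseteq\mathcal{H}$, $d(S,T)=\frac{e(S,T)}{|S||T|}$ with $e(S,T)$ the number of edges between $S$ and $T$. Hypotheses $h_1,h_2$ are $\epsilon$-close if $|\{x\in\mathcal{X}: h_1(x)\ne h_2(x)\}|\le\epsilon|\mathcal{X}|$; $B_h(\epsilon)$ is the set of hypotheses $\epsilon$-close to $h$. $T\subseteq\mathcal{H}$ is $(\alpha,\epsilon)$-tight if some $h$ has $|T\cap B_h(\epsilon)|\ge\alpha|T|$. $\mathcal{H}$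 is $(\alpha,\epsilon)$-separable if for every $T\subseteq\mathcal{H}$ that is not $(\alpha,\epsilon)$-tight there exist $S\subseteq\mathcal{X}$ and disjoint $T_0,T_1\subseteq T$ with $|S|\ge\alpha|\mathcal{X}|$, $|T_0|,|T_1|\ge\alpha|T|$ and $|d(S,T_0)-d(S,T_1)|\ge\alpha$. *)

theory Defs
  imports Complex_Main
begin

text \<open>Generic notions. A hypothesis over a finite domain X is identified with
  the set of points of X it labels 1; a class is a set of such sets.\<close>

definition edges :: "'a set \<Rightarrow> 'a set set \<Rightarrow> nat" where
  "edges S T = card {(x, h). x \<in> S \<and> h \<in> T \<and> x \<in> h}"

definition density :: "'a set \<Rightarrow> 'a set set \<Rightarrow> real" where
  "density S T = real (edges S T) / (real (card S) * real (card T))"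

definition eps_close :: "'a set \<Rightarrow> real \<Rightarrow> 'a set \<Rightarrow> 'a set \<Rightarrow> bool" where
  "eps_close X eps h1 h2 \<longleftrightarrow>
     real (card {x \<in> X. (x \<in> h1) \<noteq> (x \<in> h2)}) \<le> eps * real (card X)"

definition hball :: "'a set \<Rightarrow> 'a set set \<Rightarrow> 'a set \<Rightarrow> real \<Rightarrow> 'a set set" where
  "hball X H h eps = {h' \<in> H. eps_close X eps h h'}"

definition tight :: "'a set \<Rightarrow> 'a set set \<Rightarrow> 'a set set \<Rightarrow> real \<Rightarrow> real \<Rightarrow> bool" where
  "tight X H T alpha eps \<longleftrightarrow>
     (\<exists>h \<in> H. real (card (T \<inter> hball X H h eps)) \<ge> alpha * real (card T))"

definition separable :: "'a set \<Rightarrow> 'a set set \<Rightarrow> real \<Rightarrow> real \<Rightarrow> bool" where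
  "separable X H alpha eps \<longleftrightarrow>
     (\<forall>T \<subseteq> H. \<not> tight X H T alpha eps \<longrightarrow>
        (\<exists>S T0 T1. S \<subseteq> X \<and> T0 \<subseteq> T \<and> T1 \<subseteq> T \<and> T0 \<inter> T1 = {} \<and>
           real (card S) \<ge> alpha * real (card X) \<and>
           real (card T0) \<ge> alpha * real (card T) \<and>
           real (card T1) \<ge> alpha * real (card T) \<and>
           \<bar>density S T0 - density S T1\<bar> \<ge> alpha))"

definition grid :: "nat \<Rightarrow> real set" where
  "grid n = {real i / real n | i. i \<in> {1..n}}"

definition ep_params :: "real \<Rightarrow> nat \<Rightarrow> (nat \<Rightarrow> real) \<Rightarrow> bool" where
  "ep_params p k a \<longleftrightarrow> k \<ge> 1 \<and>
     (\<forall>i. Suc i < k \<longrightarrow> a i + p < a (Suc i)) \<and> a (k - 1) + p < 1"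

definition ep_hyp :: "real set \<Rightarrow> real \<Rightarrow> nat \<Rightarrow> (nat \<Rightarrow> real) \<Rightarrow> real set" where
  "ep_hyp X p k a = {x \<in> X. \<exists>i<k. a i \<le> x \<and> x \<le> a i + p}"

definition H_EP :: "real set \<Rightarrow> real \<Rightarrow> real set set" where
  "H_EP X p = {ep_hyp X p k a | k a. ep_params p k a}"

end

theory Submission
  imports Defs
begin


lemma card_filter_real:
  "finite X \<Longrightarrow> real (card {x\<in>X. P x}) = (\<Sum>x\<in>X. if P x then 1 else 0)"
  by (simp add: sum.inter_filter[symmetric])

lemma pair_sum:
  assumes fX: "finite X" and fT: "finite T"
  shows "(\<Sum>h\<in>T. \<Sum>h'\<in>T. real (card {x\<in>X. (x\<in>h) \<noteq> (x\<in>h')}))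
       = (\<Sum>x\<in>X. 2 * real (card {h\<in>T. x\<in>h}) * real (card {h\<in>T. x\<notin>h}))"
proof -
  have "(\<Sum>h\<in>T. \<Sum>h'\<in>T. real (card {x\<in>X. (x\<in>h) \<noteq> (x\<in>h')}))
      = (\<Sum>h\<in>T. \<Sum>h'\<in>T. \<Sum>x\<in>X. if (x\<in>h) \<noteq> (x\<in>h') then 1 else 0)"
    using fX by (simp add: card_filter_real)
  also have "\<dots> = (\<Sum>h\<in>T. \<Sum>x\<in>X. \<Sum>h'\<in>T. if (x\<in>h) \<noteq> (x\<in>h') then 1 else 0)"
    by (rule sum.cong[OF refl], rule sum.swap)
  also have "\<dots> = (\<Sum>x\<in>X. \<Sum>h\<in>T. \<Sum>h'\<in>T. if (x\<in>h) \<noteq> (x\<in>h') then 1 else 0)"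
    by (rule sum.swap)
  also have "\<dots> = (\<Sum>x\<in>X. 2 * real (card {h\<in>T. x\<in>h}) * real (card {h\<in>T. x\<notin>h}))"
  proof (rule sum.cong[OF refl])
    fix x
    have e: "(\<Sum>h'\<in>T. if (x\<in>h) \<noteq> (x\<in>h') then 1 else 0) =
       (if x \<in> h then real (card {h\<in>T. x\<notin>h}) else real (card {h\<in>T. x\<in>h}))" for h
      using fT by (simp add: card_filter_real)
    have "(\<Sum>h\<in>T. \<Sum>h'\<in>T. if (x\<in>h) \<noteq> (x\<in>h') then 1 else (0::real)) =
       (\<Sum>h\<in>T. if x \<in> h then real (card {h\<in>T. x\<notin>h}) else real (card {h\<in>T. x\<in>h}))"
      using e by simp
    also have "\<dots> = real (card (T \<inter> {h. x\<in>h})) * real (card {h\<in>T. x\<notin>h})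
                    + real (card (T \<inter> - {h. x\<in>h})) * real (card {h\<in>T. x\<in>h})"
      using fT by (simp add: sum.If_cases)
    also have "T \<inter> {h. x\<in>h} = {h\<in>T. x\<in>h}" by auto
    also have "T \<inter> - {h. x\<in>h} = {h\<in>T. x\<notin>h}" by auto
    finally show "(\<Sum>h\<in>T. \<Sum>h'\<in>T. if (x\<in>h) \<noteq> (x\<in>h') then 1 else (0::real)) =
       2 * real (card {h\<in>T. x\<in>h}) * real (card {h\<in>T. x\<notin>h})" by simp
  qed
  finally show ?thesis .
qed

lemma disc_trans:
  "P a \<noteq> P b \<Longrightarrow> (a::nat) \<le> b \<Longrightarrow> \<exists>i. a \<le> i \<and> i < b \<and> P i \<noteq> P (Suc i)"
proof (induction b)
  case 0 then show ?case by simp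
next
  case (Suc b)
  show ?case
  proof (cases "a \<le> b \<and> P a \<noteq> P b")
    case True
    then obtain i where "a \<le> i" "i < b" "P i \<noteq> P (Suc i)" using Suc.IH by blast
    then show ?thesis by (intro exI[of _ i]) simp
  next
    case False
    show ?thesis
    proof (cases "a \<le> b")
      case True
      with False have "P a = P b" by blast
      with Suc.prems True show ?thesis by (intro exI[of _ b]) simp
    next
      case F2: False
      with Suc.prems have "a = Suc b" by simp
      with Suc.prems show ?thesis by simp
    qed
  qed
qed

lemma chain_ep:
  assumes "ep_params p k a" "j \<le> j'" "j' < k"
  shows "a j + real (j' - j) * p \<le> a j'"
  using assms(2,3)
proof (induction j' rule: dec_induct)
  case base then show ?case by simp
next
  case (step m)
  have "a m + p < a (Suc m)" using assms(1) step by (simp add: ep_params_def)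
  moreover have "a j + real (m - j) * p \<le> a m" using step by simp
  moreover have "real (Suc m - j) = real (m - j) + 1" using step by simp
  ultimately show ?case by (simp add: algebra_simps)
qed

lemma sum_div_blocks:
  fixes G :: "nat \<Rightarrow> real"
  assumes "0 < w"
  shows "(\<Sum>i<m*w. G (i div w)) = real w * (\<Sum>j<m. G j)"
proof (induction m)
  case 0 then show ?case by simp
next
  case (Suc m)
  have "(\<Sum>i<Suc m*w. G (i div w)) = (\<Sum>i<m*w. G (i div w)) + (\<Sum>i\<in>{m*w..<m*w+w}. G (i div w))"
    by (simp add: sum.atLeastLessThan_concat[symmetric] atLeast0LessThan[symmetric] add.commute)
  also have "(\<Sum>i\<in>{m*w..<m*w+w}. G (i div w)) = (\<Sum>i\<in>{m*w..<m*w+w}. G m)"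
  proof (rule sum.cong[OF refl])
    fix i assume "i \<in> {m*w..<m*w+w}"
    then have "w * m \<le> i" "i < w * Suc m" by (auto simp: algebra_simps)
    then have "i div w = m" by (rule div_nat_eqI)
    then show "G (i div w) = G m" by simp
  qed
  finally show ?case using Suc.IH by (simp add: algebra_simps)
qed



lemma grid_img:
  "grid n = (\<lambda>i. real (Suc i) / real n) ` {..<n}"
proof -
  have "grid n = (\<lambda>i. real i / real n) ` {1..n}" unfolding grid_def by auto
  also have "{1..n} = Suc ` {..<n}" by (simp add: image_Suc_lessThan)
  finally show ?thesis by (simp add: image_image)
qed

lemma grid_inj:
  "n \<ge> 1 \<Longrightarrow> inj_on (\<lambda>i. real (Suc i) / real n) {..<n}"
  by (auto simp: inj_on_def)

lemma card_grid: "n \<ge> 1 \<Longrightarrow> card (grid n) = n"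
  unfolding grid_img by (subst card_image[OF grid_inj]) auto

lemma cardJ:
  fixes p :: real
  assumes p: "0 < p" and n: "n \<ge> 1" and ep: "ep_params p k a"
  shows "real (card {j. j < k \<and> 1 / real n - p \<le> a j}) \<le> 1 / p + 1"
proof (cases "{j. j < k \<and> 1 / real n - p \<le> a j} = {}")
  case True then have "real (card {j. j < k \<and> 1 / real n - p \<le> a j}) = 0"
    by (simp only: True card.empty of_nat_0)
  moreover have "0 < 1 / p" using p by simp
  ultimately show ?thesis by linarith
next
  case False
  define J where "J = {j. j < k \<and> 1 / real n - p \<le> a j}"
  have fJ: "finite J" unfolding J_def by auto
  define j0 where "j0 = Min J"
  have j0J: "j0 \<in> J" using False fJ unfolding j0_def J_def by (intro Min_in) auto
  have "J \<subseteq> {j0..<k}" unfolding J_def j0_def using fJ J_def by auto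
  then have cJ: "card J \<le> k - j0" by (metis card_atLeastLessThan card_mono finite_atLeastLessThan)
  have j0k: "j0 < k" and aj0: "1 / real n - p \<le> a j0" using j0J unfolding J_def by auto
  have k1: "k \<ge> 1" using ep by (simp add: ep_params_def)
  have last: "a (k - 1) + p < 1" using ep by (simp add: ep_params_def)
  have ch: "a j0 + real (k - 1 - j0) * p \<le> a (k - 1)"
    using chain_ep[OF ep, of j0 "k-1"] j0k by simp
  have "0 < 1 / real n" using n by simp
  then have "real (k - 1 - j0) * p < 1" using ch last aj0 by linarith
  then have "real (k - 1 - j0) < 1 / p" using p by (simp add: field_simps)
  moreover have "real (k - j0) = real (k - 1 - j0) + 1" using j0k by simp
  ultimately show ?thesis using cJ unfolding J_def[symmetric]
    by (smt (verit) of_nat_le_iff)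
qed

lemma trans_bound:
  fixes p :: real
  assumes p: "0 < p" and n: "n \<ge> 1" and ep: "ep_params p k a"
  shows "real (card {i. Suc i < n \<and>
     ((real (Suc i) / real n) \<in> ep_hyp (grid n) p k a) \<noteq>
     ((real (Suc (Suc i)) / real n) \<in> ep_hyp (grid n) p k a)}) \<le> 2 / p + 2"
proof -
  define f where "f = (\<lambda>i. real (Suc i) / real n)"
  define h where "h = ep_hyp (grid n) p k a"
  have fg: "i < n \<Longrightarrow> f i \<in> grid n" for i unfolding f_def grid_img by auto
  have mem: "i < n \<Longrightarrow> (f i \<in> h \<longleftrightarrow> (\<exists>j<k. a j \<le> f i \<and> f i \<le> a j + p))" for i
    using fg unfolding h_def ep_hyp_def by auto
  have npos: "real n > 0" using n by simp
  have fmono: "i < i' \<Longrightarrow> f i < f i'" for i i' unfolding f_def using npos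
    by (simp add: divide_strict_right_mono)
  have fmono2: "i < i' \<Longrightarrow> f (Suc i) \<le> f i'" for i i' unfolding f_def using npos
    by (simp add: divide_right_mono)
  have fge: "1 / real n \<le> f i" for i unfolding f_def using npos
    by (simp add: divide_right_mono)
  define J where "J = {j. j < k \<and> 1 / real n - p \<le> a j}"
  have fJ: "finite J" unfolding J_def by auto
  define R where "R = {i. Suc i < n \<and> f i \<in> h \<and> f (Suc i) \<notin> h}"
  define L where "L = {i. Suc i < n \<and> f i \<notin> h \<and> f (Suc i) \<in> h}"
  define r where "r = (\<lambda>i. SOME j. j<k \<and> a j \<le> f i \<and> f i \<le> a j + p)"
  define l where "l = (\<lambda>i. SOME j. j<k \<and> a j \<le> f (Suc i) \<and> f (Suc i) \<le> a j + p)"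
  have rR: "r i < k \<and> a (r i) \<le> f i \<and> f i \<le> a (r i) + p \<and> a (r i) + p < f (Suc i)"
    if "i \<in> R" for i
  proof -
    have "\<exists>j<k. a j \<le> f i \<and> f i \<le> a j + p" using that mem unfolding R_def by auto
    then have A: "r i < k \<and> a (r i) \<le> f i \<and> f i \<le> a (r i) + p"
      unfolding r_def by (rule someI_ex) 
    moreover have "\<not> (a (r i) \<le> f (Suc i) \<and> f (Suc i) \<le> a (r i) + p)"
      using that mem[of "Suc i"] A unfolding R_def by auto
    moreover have "f i < f (Suc i)" by (rule fmono) simp
    ultimately show ?thesis by auto
  qed
  have lL: "l i < k \<and> a (l i) \<le> f (Suc i) \<and> f (Suc i) \<le> a (l i) + p \<and> f i < a (l i)"
    if "i \<in> L" for i
  proof -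
    have "\<exists>j<k. a j \<le> f (Suc i) \<and> f (Suc i) \<le> a j + p" using that mem unfolding L_def by auto
    then have A: "l i < k \<and> a (l i) \<le> f (Suc i) \<and> f (Suc i) \<le> a (l i) + p"
      unfolding l_def by (rule someI_ex) 
    moreover have "\<not> (a (l i) \<le> f i \<and> f i \<le> a (l i) + p)"
      using that mem[of "i"] A unfolding L_def by auto
    moreover have "f i < f (Suc i)" by (rule fmono) simp
    ultimately show ?thesis by auto
  qed
  have cR: "card R \<le> card J"
  proof (rule card_inj_on_le[OF _ _ fJ])
    show "inj_on r R"
    proof (rule inj_onI)
      fix i i' assume i: "i \<in> R" and i': "i' \<in> R" and e: "r i = r i'"
      show "i = i'"
      proof (rule ccontr)
        assume "i \<noteq> i'"
        then consider "i < i'" | "i' < i" by linarith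
        then show False
        proof cases
          case 1 then have "f (Suc i) \<le> f i'" by (rule fmono2)
          then show False using rR[OF i] rR[OF i'] e by auto
        next
          case 2 then have "f (Suc i') \<le> f i" by (rule fmono2)
          then show False using rR[OF i] rR[OF i'] e by auto
        qed
      qed
    qed
    show "r ` R \<subseteq> J"
    proof
      fix y assume "y \<in> r ` R"
      then obtain i where i: "i \<in> R" "y = r i" by auto
      then show "y \<in> J" using rR[OF i(1)] fge[of i] unfolding J_def by auto
    qed
  qed
  have cL: "card L \<le> card J"
  proof (rule card_inj_on_le[OF _ _ fJ])
    show "inj_on l L"
    proof (rule inj_onI)
      fix i i' assume i: "i \<in> L" and i': "i' \<in> L" and e: "l i = l i'"
      show "i = i'"
      proof (rule ccontr)
        assume "i \<noteq> i'"
        then consider "i < i'" | "i' < i" by linarith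
        then show False
        proof cases
          case 1 then have "f (Suc i) \<le> f i'" by (rule fmono2)
          then show False using lL[OF i] lL[OF i'] e by auto
        next
          case 2 then have "f (Suc i') \<le> f i" by (rule fmono2)
          then show False using lL[OF i] lL[OF i'] e by auto
        qed
      qed
    qed
    show "l ` L \<subseteq> J"
    proof
      fix y assume "y \<in> l ` L"
      then obtain i where i: "i \<in> L" "y = l i" by auto
      then show "y \<in> J" using lL[OF i(1)] fge[of i] p unfolding J_def by auto
    qed
  qed
  have "{i. Suc i < n \<and> (f i \<in> h) \<noteq> (f (Suc i) \<in> h)} = R \<union> L"
    unfolding R_def L_def by auto
  moreover have "card (R \<union> L) \<le> card R + card L" by (rule card_Un_le)
  ultimately have "card {i. Suc i < n \<and> (f i \<in> h) \<noteq> (f (Suc i) \<in> h)} \<le> 2 * card J"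
    using cR cL by simp
  then have "real (card {i. Suc i < n \<and> (f i \<in> h) \<noteq> (f (Suc i) \<in> h)}) \<le> 2 * real (card J)"
    by (metis of_nat_le_iff of_nat_mult of_nat_numeral)
  also have "\<dots> \<le> 2 * (1/p + 1)" using cardJ[OF p n ep] unfolding J_def by simp
  finally show ?thesis unfolding f_def h_def by (simp add: algebra_simps)
qed



theorem theorem7:
  fixes p alpha eps :: real and n :: nat
  assumes "0 < p" "p < 1" "n \<ge> 1"
    and "0 < alpha" "alpha < 1" "0 < eps" "eps < 1"
    and "eps < 24 / p"
    and "2 / real (card (grid n)) < alpha"
    and "alpha < p\<^sup>2 * eps / 24"
  shows "separable (grid n) (H_EP (grid n) p) alpha eps"
  unfolding separable_def
proof (intro allI impI)
  fix T assume TH: "T \<subseteq> H_EP (grid n) p" and nt: "\<not> tight (grid n) (H_EP (grid n) p) T alpha eps"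
  define X where "X = grid n"
  define H where "H = H_EP (grid n) p"
  define f where "f = (\<lambda>i. real (Suc i) / real n)"
  have p: "0 < p" and n: "n \<ge> 1" and al: "0 < alpha" and ep: "0 < eps" "eps < 1"
    using assms by auto
  have npos: "0 < real n" using n by simp
  have cX: "card X = n" unfolding X_def using card_grid[OF n] .
  have fX: "finite X" using cX n card.infinite by fastforce
  have Xf: "X = f ` {..<n}" unfolding X_def f_def by (rule grid_img)
  have finj: "inj_on f {..<n}" unfolding f_def using grid_inj[OF n] .
  have HX: "H \<subseteq> Pow X" unfolding H_def H_EP_def X_def ep_hyp_def by auto
  have fH: "finite H" using HX fX by (meson finite_Pow_iff rev_finite_subset)
  have TH': "T \<subseteq> H" using TH unfolding H_def .
  have fT: "finite T" by (rule finite_subset[OF TH' fH])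
  define N where "N = real (card T)"
  have Tne: "T \<noteq> {}"
  proof
    assume "T = {}"
    have "ep_params p 1 (\<lambda>_. -1)" unfolding ep_params_def using p assms(2) by simp
    then have "ep_hyp (grid n) p 1 (\<lambda>_. -1) \<in> H_EP (grid n) p" unfolding H_EP_def by blast
    then show False using nt \<open>T = {}\<close> unfolding tight_def by auto
  qed
  have Npos: "0 < N" unfolding N_def using Tne fT by (simp add: card_gt_0_iff)
  have close: "real (card {h'\<in>T. eps_close X eps h h'}) < alpha * N" if "h \<in> T" for h
  proof -
    have "T \<inter> hball (grid n) (H_EP (grid n) p) h eps = {h'\<in>T. eps_close X eps h h'}"
      using TH unfolding hball_def X_def by auto
    then show ?thesis using nt that TH unfolding tight_def N_def by force
  qed
  have an: "2 < alpha * real n" using assms(9) npos unfolding cX[unfolded X_def]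
    by (simp add: field_simps)
  define w where "w = nat \<lceil>alpha * real n\<rceil>"
  have wc: "real w = real_of_int \<lceil>alpha * real n\<rceil>" unfolding w_def using an by simp
  have w1: "alpha * real n \<le> real w" unfolding wc by linarith
  have w2: "real w < alpha * real n + 1" unfolding wc by linarith
  have wpos: "0 < w" using w1 an by linarith
  define m where "m = n div w"
  have mw: "m * w \<le> n" unfolding m_def using div_mult_mod_eq[of n w] by linarith
  define W where "W = (\<lambda>j. f ` {j*w..<j*w+w})"
  define A where "A = (\<lambda>j. {h\<in>T. W j \<subseteq> h})"
  define B where "B = (\<lambda>j. {h\<in>T. W j \<inter> h = {}})"
  define C where "C = (\<lambda>j. {h\<in>T. \<not> W j \<subseteq> h \<and> W j \<inter> h \<noteq> {}})"
  have WX: "W j \<subseteq> X" if "j < m" for j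
  proof -
    have "j * w + w \<le> m * w" using that by (metis add.commute mult_Suc less_eq_Suc_le mult_le_mono1)
    then have "{j*w..<j*w+w} \<subseteq> {..<n}" using mw by auto
    then show ?thesis unfolding W_def Xf by auto
  qed
  have cW: "card (W j) = w" if "j < m" for j
  proof -
    have "j * w + w \<le> m * w" using that by (metis add.commute mult_Suc less_eq_Suc_le mult_le_mono1)
    then have "{j*w..<j*w+w} \<subseteq> {..<n}" using mw by auto
    then have "inj_on f {j*w..<j*w+w}" using finj by (rule inj_on_subset[rotated])
    then show ?thesis unfolding W_def by (simp add: card_image)
  qed
  have ex: "\<exists>j<m. alpha * N \<le> real (card (A j)) \<and> alpha * N \<le> real (card (B j))"
  proof (rule ccontr)
    assume H0: "\<not> (\<exists>j<m. alpha * N \<le> real (card (A j)) \<and> alpha * N \<le> real (card (B j)))"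
    define cc where "cc = (\<lambda>x. real (card {h\<in>T. x\<in>h}))"
    define dd where "dd = (\<lambda>x. real (card {h\<in>T. x\<notin>h}))"
    define D where "D = (\<lambda>h h'. real (card {x\<in>X. (x\<in>h) \<noteq> (x\<in>h')}))"
    define K where "K = 2 / p + 2"
    have Kpos: "0 \<le> K" unfolding K_def using p by simp
    have ccN: "cc x \<le> N" "0 \<le> cc x" for x
      unfolding cc_def N_def using fT by (auto intro: card_mono)
    have ddN: "dd x \<le> N" "0 \<le> dd x" for x
      unfolding dd_def N_def using fT by (auto intro: card_mono)
    have low1: "(\<Sum>h'\<in>T. D h h') \<ge> (1 - alpha) * N * (eps * real n)" if hT: "h \<in> T" for h
    proof -
      define Cl where "Cl = {h'\<in>T. eps_close X eps h h'}"
      have cle: "card Cl \<le> card T" unfolding Cl_def using fT by (intro card_mono) auto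
      have "(\<Sum>h'\<in>T - Cl. D h h') \<le> (\<Sum>h'\<in>T. D h h')"
        by (rule sum_mono2[OF fT]) (auto simp: D_def)
      moreover have "real (card (T - Cl)) * (eps * real n) \<le> (\<Sum>h'\<in>T - Cl. D h h')"
      proof (rule sum_bounded_below)
        fix h' assume "h' \<in> T - Cl"
        then have "\<not> eps_close X eps h h'" unfolding Cl_def by auto
        then show "eps * real n \<le> D h h'" unfolding eps_close_def D_def cX by simp
      qed
      moreover have "real (card (T - Cl)) = N - real (card Cl)"
        unfolding N_def using fT cle by (subst card_Diff_subset) (auto simp: Cl_def of_nat_diff)
      moreover have "real (card Cl) < alpha * N" unfolding Cl_def using close[OF hT] .
      moreover have "0 \<le> eps * real n" using ep npos by simp
      ultimately have "N - alpha * N \<le> real (card (T - Cl))" "0 \<le> eps * real n"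
        "real (card (T - Cl)) * (eps * real n) \<le> (\<Sum>h'\<in>T. D h h')" by linarith+
      then have "(N - alpha * N) * (eps * real n) \<le> (\<Sum>h'\<in>T. D h h')"
        by (meson mult_right_mono order_trans)
      then show ?thesis by (simp add: algebra_simps)
    qed
    have low: "N * ((1 - alpha) * N * (eps * real n)) \<le> (\<Sum>h\<in>T. \<Sum>h'\<in>T. D h h')"
      using sum_bounded_below[of T "(1 - alpha) * N * (eps * real n)" "\<lambda>h. \<Sum>h'\<in>T. D h h'"] low1
      unfolding N_def by simp
    have ps: "(\<Sum>h\<in>T. \<Sum>h'\<in>T. D h h') = (\<Sum>x\<in>X. 2 * cc x * dd x)"
      unfolding D_def cc_def dd_def by (rule pair_sum[OF fX fT])
    have reidx: "(\<Sum>x\<in>X. 2 * cc x * dd x) = (\<Sum>i<n. 2 * cc (f i) * dd (f i))"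
      unfolding Xf by (subst sum.reindex[OF finj]) simp
    define bnd where "bnd = (\<lambda>i. if i < m * w then N * (alpha * N + real (card (C (i div w)))) else N * N)"
    have pt: "cc (f i) * dd (f i) \<le> bnd i" if "i < n" for i
    proof (cases "i < m * w")
      case True
      define j where "j = i div w"
      have jm: "j < m" unfolding j_def using True wpos
        by (simp add: div_less_iff_less_mult)
      have "j * w \<le> i" "i < j * w + w" unfolding j_def using wpos
        apply (metis div_times_less_eq_dividend mult.commute)
        by (metis add.commute div_mult_mod_eq mod_less_divisor mult.commute nat_add_left_cancel_less wpos)
      then have fW: "f i \<in> W j" unfolding W_def by auto
      have s1: "{h\<in>T. f i\<in>h} \<subseteq> A j \<union> C j" using fW unfolding A_def C_def by auto
      have s2: "{h\<in>T. f i\<notin>h} \<subseteq> B j \<union> C j" using fW unfolding B_def C_def by auto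
      have fA: "finite (A j)" "finite (B j)" "finite (C j)" unfolding A_def B_def C_def using fT by auto
      have c1: "cc (f i) \<le> real (card (A j)) + real (card (C j))"
      proof -
        have "card {h\<in>T. f i\<in>h} \<le> card (A j \<union> C j)" using s1 fA by (intro card_mono) auto
        also have "\<dots> \<le> card (A j) + card (C j)" by (rule card_Un_le)
        finally show ?thesis unfolding cc_def by linarith
      qed
      have c2: "dd (f i) \<le> real (card (B j)) + real (card (C j))"
      proof -
        have "card {h\<in>T. f i\<notin>h} \<le> card (B j \<union> C j)" using s2 fA by (intro card_mono) auto
        also have "\<dots> \<le> card (B j) + card (C j)" by (rule card_Un_le)
        finally show ?thesis unfolding dd_def by linarith
      qed
      have bi: "bnd i = N * (alpha * N + real (card (C j)))" unfolding bnd_def j_def using True by simp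
      from H0 jm have "\<not> (alpha * N \<le> real (card (A j)) \<and> alpha * N \<le> real (card (B j)))" by blast
      then have "real (card (A j)) < alpha * N \<or> real (card (B j)) < alpha * N" by linarith
      then show ?thesis
      proof
        assume "real (card (A j)) < alpha * N"
        then have "cc (f i) \<le> alpha * N + real (card (C j))" using c1 by linarith
        then have "cc (f i) * dd (f i) \<le> (alpha * N + real (card (C j))) * N"
          by (intro mult_mono) (use ccN(1)[of "f i"] ccN(2)[of "f i"] ddN(1)[of "f i"] ddN(2)[of "f i"] in linarith)+
        then show ?thesis unfolding bi by (simp add: algebra_simps)
      next
        assume "real (card (B j)) < alpha * N"
        then have "dd (f i) \<le> alpha * N + real (card (C j))" using c2 by linarith
        then have "cc (f i) * dd (f i) \<le> N * (alpha * N + real (card (C j)))"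
          by (intro mult_mono) (use ccN(1)[of "f i"] ccN(2)[of "f i"] ddN(1)[of "f i"] ddN(2)[of "f i"] in linarith)+
        then show ?thesis unfolding bi .
      qed
    next
      case False
      have "cc (f i) * dd (f i) \<le> N * N"
        by (intro mult_mono) (use ccN(1)[of "f i"] ccN(2)[of "f i"] ddN(1)[of "f i"] ddN(2)[of "f i"] in linarith)+
      then show ?thesis unfolding bnd_def using False by simp
    qed
    have up1: "(\<Sum>i<n. 2 * cc (f i) * dd (f i)) \<le> (\<Sum>i<n. 2 * bnd i)"
    proof (rule sum_mono)
      fix i assume "i \<in> {..<n}"
      then have "cc (f i) * dd (f i) \<le> bnd i" using pt by simp
      then have "2 * (cc (f i) * dd (f i)) \<le> 2 * bnd i" by linarith
      then show "2 * cc (f i) * dd (f i) \<le> 2 * bnd i" by (simp only: mult.assoc)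
    qed
    have split: "(\<Sum>i<n. 2 * bnd i) = 2 * ((\<Sum>i<m*w. bnd i) + (\<Sum>i\<in>{m*w..<n}. bnd i))"
    proof -
      have u: "{..<n} = {..<m*w} \<union> {m*w..<n}" using mw by auto
      have "(\<Sum>i<n. 2 * bnd i) = (\<Sum>i<m*w. 2 * bnd i) + (\<Sum>i\<in>{m*w..<n}. 2 * bnd i)"
        unfolding u by (rule sum.union_disjoint) auto
      then show ?thesis by (simp add: sum_distrib_left)
    qed
    have b1: "(\<Sum>i<m*w. bnd i) = N * (real w * (\<Sum>j<m. alpha * N + real (card (C j))))"
    proof -
      have "(\<Sum>i<m*w. bnd i) = (\<Sum>i<m*w. N * (alpha * N + real (card (C (i div w)))))"
        by (rule sum.cong) (auto simp: bnd_def)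
      also have "\<dots> = N * (\<Sum>i<m*w. alpha * N + real (card (C (i div w))))"
        by (simp add: sum_distrib_left)
      also have "(\<Sum>i<m*w. alpha * N + real (card (C (i div w)))) = real w * (\<Sum>j<m. alpha * N + real (card (C j)))"
        using sum_div_blocks[OF wpos, of "\<lambda>j. alpha * N + real (card (C j))" m] by simp
      finally show ?thesis .
    qed
    have b2: "(\<Sum>i\<in>{m*w..<n}. bnd i) = real (n - m * w) * (N * N)"
      by (simp add: bnd_def)
    have sumC: "(\<Sum>j<m. real (card (C j))) \<le> N * K"
    proof -
      have cnt: "real (card {j\<in>{..<m}. h \<in> C j}) \<le> K" if hT: "h \<in> T" for h
      proof -
        obtain k a where epk: "ep_params p k a" and hdef: "h = ep_hyp (grid n) p k a"
          using hT TH unfolding H_EP_def by auto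
        define Tr where "Tr = {i. Suc i < n \<and> (f i \<in> h) \<noteq> (f (Suc i) \<in> h)}"
        have trb: "real (card Tr) \<le> K" unfolding Tr_def K_def hdef f_def
          using trans_bound[OF p n epk] by simp
        have fTr: "finite Tr" unfolding Tr_def by (rule finite_subset[of _ "{..<n}"]) auto
        have sub: "{j\<in>{..<m}. h \<in> C j} \<subseteq> (\<lambda>i. i div w) ` Tr"
        proof
          fix j assume "j \<in> {j\<in>{..<m}. h \<in> C j}"
          then have jm: "j < m" and hC: "h \<in> C j" by auto
          from hC have "\<not> W j \<subseteq> h" "W j \<inter> h \<noteq> {}" unfolding C_def by auto
          then obtain x1 x2 where x: "x1 \<in> W j" "x1 \<notin> h" "x2 \<in> W j" "x2 \<in> h" by blast
          from x(1) obtain i1 where i1a: "i1 \<in> {j*w..<j*w+w}" "x1 = f i1" unfolding W_def by blast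
          from x(3) obtain i2 where i2a: "i2 \<in> {j*w..<j*w+w}" "x2 = f i2" unfolding W_def by blast
          have i1: "i1 \<in> {j*w..<j*w+w}" "f i1 \<notin> h" using i1a x by auto
          have i2: "i2 \<in> {j*w..<j*w+w}" "f i2 \<in> h" using i2a x by auto
          have "(f (min i1 i2) \<in> h) \<noteq> (f (max i1 i2) \<in> h)" using i1 i2
            by (cases "i1 \<le> i2") (auto simp: min_def max_def)
          then have "\<exists>i. min i1 i2 \<le> i \<and> i < max i1 i2 \<and> (f i \<in> h) \<noteq> (f (Suc i) \<in> h)"
            using disc_trans[of "\<lambda>i. f i \<in> h" "min i1 i2" "max i1 i2"] min.cobounded1 max.cobounded1
            by (metis (no_types, lifting) order_trans)
          then obtain i where i: "min i1 i2 \<le> i" "i < max i1 i2" "(f i \<in> h) \<noteq> (f (Suc i) \<in> h)"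
            by blast
          have "j * w + w \<le> m * w" using jm by (metis add.commute mult_Suc less_eq_Suc_le mult_le_mono1)
          then have "Suc i < n" using i i1 i2 mw by auto
          moreover have "i div w = j"
          proof (rule div_nat_eqI)
            show "w * j \<le> i" using i i1 i2 by (auto simp: algebra_simps)
            show "i < w * Suc j" using i i1 i2 by (auto simp: algebra_simps)
          qed
          ultimately show "j \<in> (\<lambda>i. i div w) ` Tr" unfolding Tr_def using i(3)
            by (intro image_eqI[of _ _ i]) auto
        qed
        have "card {j\<in>{..<m}. h \<in> C j} \<le> card ((\<lambda>i. i div w) ` Tr)"
          by (rule card_mono) (use fTr sub in auto)
        also have "\<dots> \<le> card Tr" by (rule card_image_le[OF fTr])
        finally have "real (card {j\<in>{..<m}. h \<in> C j}) \<le> real (card Tr)" by simp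
        then show ?thesis using trb by linarith
      qed
      have "(\<Sum>j<m. real (card (C j))) = (\<Sum>j<m. \<Sum>h\<in>T. if h \<in> C j then 1 else 0)"
      proof (rule sum.cong[OF refl])
        fix j
        have "C j = {h\<in>T. h \<in> C j}" unfolding C_def by auto
        then show "real (card (C j)) = (\<Sum>h\<in>T. if h \<in> C j then 1 else 0)"
          using card_filter_real[OF fT, of "\<lambda>h. h \<in> C j"] by simp
      qed
      also have "\<dots> = (\<Sum>h\<in>T. \<Sum>j<m. if h \<in> C j then 1 else 0)" by (rule sum.swap)
      also have "\<dots> = (\<Sum>h\<in>T. real (card {j\<in>{..<m}. h \<in> C j}))"
        by (rule sum.cong[OF refl]) (rule card_filter_real[symmetric], simp)
      also have "\<dots> \<le> (\<Sum>h\<in>T. K)" by (rule sum_mono) (rule cnt)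
      also have "\<dots> = N * K" unfolding N_def by simp
      finally show ?thesis .
    qed
    have nmw: "real (n - m * w) \<le> alpha * real n"
    proof -
      have "n - m * w = n mod w" unfolding m_def by (simp add: minus_div_mult_eq_mod)
      also have "\<dots> < w" using wpos by simp
      finally have "n - m * w + 1 \<le> w" by simp
      then have "real (n - m * w) + 1 \<le> real w" by linarith
      then show ?thesis using w2 by linarith
    qed
    have tot: "N * ((1 - alpha) * N * (eps * real n)) \<le>
        2 * (N * (real w * (real m * (alpha * N) + N * K)) + real (n - m * w) * (N * N))"
    proof -
      have "N * ((1 - alpha) * N * (eps * real n)) \<le> (\<Sum>h\<in>T. \<Sum>h'\<in>T. D h h')" by (rule low)
      also have "\<dots> = (\<Sum>x\<in>X. 2 * cc x * dd x)" by (rule ps)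
      also have "\<dots> = (\<Sum>i<n. 2 * cc (f i) * dd (f i))" by (rule reidx)
      also have "\<dots> \<le> (\<Sum>i<n. 2 * bnd i)" by (rule up1)
      also have "\<dots> = 2 * ((\<Sum>i<m*w. bnd i) + (\<Sum>i\<in>{m*w..<n}. bnd i))" by (rule split)
      also have "\<dots> = 2 * (N * (real w * (\<Sum>j<m. alpha * N + real (card (C j)))) + real (n - m * w) * (N * N))"
        by (simp only: b1 b2)
      also have "(\<Sum>j<m. alpha * N + real (card (C j))) = real m * (alpha * N) + (\<Sum>j<m. real (card (C j)))"
        by (simp add: sum.distrib)
      also have "\<dots> \<le> real m * (alpha * N) + N * K" using sumC by simp
      finally show ?thesis using Npos wpos
        by (smt (verit) mult_left_mono of_nat_0_le_iff mult_nonneg_nonneg)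
    qed
    have "N * N * ((1 - alpha) * eps * real n) \<le> N * N * (2 * (real (m * w) * alpha + real w * K + real (n - m * w)))"
      using tot by (simp add: algebra_simps)
    then have key: "(1 - alpha) * eps * real n \<le> 2 * (real (m * w) * alpha + real w * K + real (n - m * w))"
      using Npos by (simp add: mult_le_cancel_left_pos)
    have mwr: "real (m * w) \<le> real n" using mw by (simp only: of_nat_le_iff)
    have k1: "real (m * w) * alpha \<le> real n * alpha" by (rule mult_right_mono[OF mwr]) (use al in linarith)
    have "real w \<le> 3/2 * (alpha * real n)" using w2 an by linarith
    then have k2: "real w * K \<le> 3/2 * (alpha * real n) * K" using Kpos by (rule mult_right_mono)
    have "(1 - alpha) * eps * real n \<le> alpha * real n * (4 + 3 * K)"
      using key k1 k2 nmw by (simp add: algebra_simps)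
    moreover have "real n * ((1 - alpha) * eps) = (1 - alpha) * eps * real n" by (simp add: algebra_simps)
    moreover have "real n * (alpha * (4 + 3 * K)) = alpha * real n * (4 + 3 * K)" by (simp add: algebra_simps)
    ultimately have "real n * ((1 - alpha) * eps) \<le> real n * (alpha * (4 + 3 * K))" by linarith
    then have k3: "(1 - alpha) * eps \<le> alpha * (4 + 3 * K)"
      using npos by (simp only: mult_le_cancel_left_pos)
    have f1: "alpha * (4 + 3 * K) = 10 * alpha + 6 * (alpha / p)" unfolding K_def using p
      by (simp add: field_simps)
    have f2: "10 * alpha \<le> 10 * (alpha / p)" using al p assms(2) by (simp add: field_simps)
    have f3: "alpha / p < p * eps / 24" using assms(10) p by (simp add: field_simps power2_eq_square)
    have f4: "p * eps \<le> eps" using p assms(2) ep by simp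
    have f5: "alpha * eps < eps / 24"
    proof -
      have "p\<^sup>2 < 1" using p assms(2) by (simp add: power2_eq_square) (metis mult_strict_mono' less_le mult_1_left)
      then have "alpha < 1/24" using assms(10) ep by (smt (verit) divide_right_mono mult_less_cancel_right2)
      then show ?thesis using ep by simp
    qed
    have f6: "(1 - alpha) * eps = eps - alpha * eps" by (simp add: algebra_simps)
    show False using k3 f1 f2 f3 f4 f5 f6 ep(1) by linarith
  qed
  then obtain j where j: "j < m" "alpha * N \<le> real (card (A j))" "alpha * N \<le> real (card (B j))"
    by blast
  have Wne: "W j \<noteq> {}" using cW[OF j(1)] wpos by auto
  have Apos: "0 < card (A j)" using j(2) al Npos
    by (metis mult_pos_pos of_nat_0_less_iff order_less_le_trans)
  have e1: "{(x, h). x \<in> W j \<and> h \<in> A j \<and> x \<in> h} = W j \<times> A j" unfolding A_def by auto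
  have e2: "{(x, h). x \<in> W j \<and> h \<in> B j \<and> x \<in> h} = {}" unfolding B_def by auto
  have d1: "density (W j) (A j) = 1"
    unfolding density_def edges_def e1 using Apos cW[OF j(1)] wpos by (simp add: card_cartesian_product)
  have d0: "density (W j) (B j) = 0"
    unfolding density_def edges_def e2 by simp
  show "\<exists>S T0 T1. S \<subseteq> grid n \<and> T0 \<subseteq> T \<and> T1 \<subseteq> T \<and> T0 \<inter> T1 = {} \<and>
           real (card S) \<ge> alpha * real (card (grid n)) \<and>
           real (card T0) \<ge> alpha * real (card T) \<and>
           real (card T1) \<ge> alpha * real (card T) \<and>
           \<bar>density S T0 - density S T1\<bar> \<ge> alpha"
  proof (intro exI conjI)
    show "W j \<subseteq> grid n" using WX[OF j(1)] unfolding X_def .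
    show "A j \<subseteq> T" unfolding A_def by auto
    show "B j \<subseteq> T" unfolding B_def by auto
    show "A j \<inter> B j = {}" unfolding A_def B_def using Wne by auto
    show "real (card (W j)) \<ge> alpha * real (card (grid n))"
      using cW[OF j(1)] w1 cX unfolding X_def by simp
    show "real (card (A j)) \<ge> alpha * real (card T)" using j(2) unfolding N_def .
    show "real (card (B j)) \<ge> alpha * real (card T)" using j(3) unfolding N_def .
    show "\<bar>density (W j) (A j) - density (W j) (B j)\<bar> \<ge> alpha" using d1 d0 assms(5) by simp
  qed
qed

end
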